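(* Let $n=2$, $m=1$, $v_1(x)=x$ and $v_2(x)=\sqrt{2x}$ for $x\ge0$. Then for every $\rho\in(0,1)$ there exist no allocation $\mathbf{x}\in\Psi(\rho)$ and pricing rule $p:\mathbb{R}_{\ge0}\to\mathbb{R}_{\ge0}$ such that $(\mathbf{x},p)$ is a Walrasian equilibrium.
   Context: Single good of supply 1; an allocation is $(x_1,x_2)\in\mathbb{R}^2_{\ge0}$ with $x_1+x_2\le1$. $\Psi(\rho)$ is the set of allocations maximizing $(v_1(x_1)^\rho+v_2(x_2)^\rho)^{1/\rho}$. Quasilinear demand set $D_i(p)=\arg\max_{y\ge0}(v_i(y)-p(y))$. $(\mathbf{x},p)$ is a Walrasian equilibrium if $x_i\in D_i(p)$ for $i=1,2$, $x_1+x_2\le1$, and $x_1+x_2=1$ if the good has nonzero cost (some $y$ has $p(y)>0$). *)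

theory Defs
  imports "HOL-Analysis.Analysis"
begin

text \<open>Single good of supply 1, two agents. An allocation is a pair (x1, x2).\<close>

definition feasible :: "real \<times> real \<Rightarrow> bool" where
  "feasible x \<longleftrightarrow> fst x \<ge> 0 \<and> snd x \<ge> 0 \<and> fst x + snd x \<le> 1"

definition ces_welfare :: "real \<Rightarrow> (real \<Rightarrow> real) \<Rightarrow> (real \<Rightarrow> real) \<Rightarrow> real \<times> real \<Rightarrow> real" where
  "ces_welfare \<rho> v1 v2 x = (v1 (fst x) powr \<rho> + v2 (snd x) powr \<rho>) powr (1 / \<rho>)"

definition Psi :: "real \<Rightarrow> (real \<Rightarrow> real) \<Rightarrow> (real \<Rightarrow> real) \<Rightarrow> (real \<times> real) set" where
  "Psi \<rho> v1 v2 = {x. feasible x \<and>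
      (\<forall>y. feasible y \<longrightarrow> ces_welfare \<rho> v1 v2 y \<le> ces_welfare \<rho> v1 v2 x)}"

definition demand :: "(real \<Rightarrow> real) \<Rightarrow> (real \<Rightarrow> real) \<Rightarrow> real set" where
  "demand v p = {y. y \<ge> 0 \<and> (\<forall>z\<ge>0. v z - p z \<le> v y - p y)}"

definition walrasian_eq :: "(real \<Rightarrow> real) \<Rightarrow> (real \<Rightarrow> real) \<Rightarrow> real \<times> real \<Rightarrow> (real \<Rightarrow> real) \<Rightarrow> bool" where
  "walrasian_eq v1 v2 x p \<longleftrightarrow>
     fst x \<in> demand v1 p \<and> snd x \<in> demand v2 p \<and> fst x + snd x \<le> 1 \<and>
     ((\<exists>y\<ge>0. p y > 0) \<longrightarrow> fst x + snd x = 1)"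

end

theory Submission imports Defs begin

definition W :: "real \<Rightarrow> real \<Rightarrow> real" where
  "W r t = t powr r + (2*(1-t)) powr (r/2)"

lemma W_deriv:
  fixes r t :: real
  assumes "0 < t" "t < 1"
  shows "DERIV (W r) t :> r * t powr (r-1) - r * (2*(1-t)) powr (r/2-1)"
proof -
  have d1: "DERIV (\<lambda>t. t powr r) t :> r * t powr (r-1)"
    using has_real_derivative_powr[OF assms(1)] .
  have g: "DERIV (\<lambda>t. 2*(1-t)) t :> -2"
    by (auto intro!: derivative_eq_intros)
  have d2': "DERIV (\<lambda>u. u powr (r/2)) (2*(1-t)) :> (r/2) * (2*(1-t)) powr (r/2-1)"
    using has_real_derivative_powr[of "2*(1-t)" "r/2"] assms by simp
  have d2: "DERIV (\<lambda>t. (2*(1-t)) powr (r/2)) t :> (r/2) * (2*(1-t)) powr (r/2-1) * (-2)"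
    using DERIV_chain2[OF d2' g] .
  have "DERIV (W r) t :> r * t powr (r-1) + (r/2) * (2*(1-t)) powr (r/2-1) * (-2)"
    unfolding W_def[abs_def] using DERIV_add[OF d1 d2] by simp
  then show ?thesis by simp
qed

lemma W_deriv_pos:
  fixes r t :: real
  assumes "0 < r" "r < 1" "0 < t" "t \<le> 1/2"
  shows "r * t powr (r-1) - r * (2*(1-t)) powr (r/2-1) > 0"
proof -
  have "t powr (r-1) \<ge> (1/2) powr (r-1)"
    using powr_mono2'[of "r-1" t "1/2"] assms by simp
  moreover have "(1/2::real) powr (r-1) > 1"
    using powr_less_mono'[of "1/2::real" "r-1" 0] assms by simp
  moreover have "(2*(1-t)) powr (r/2-1) \<le> 1"
    using powr_mono2'[of "r/2-1" 1 "2*(1-t)"] assms by simp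
  ultimately have "t powr (r-1) > (2*(1-t)) powr (r/2-1)" by linarith
  then show ?thesis using assms by simp
qed

lemma ces_W:
  fixes r t :: real
  assumes "t \<le> 1"
  shows "ces_welfare r (\<lambda>t. t) (\<lambda>t. sqrt (2 * t)) (t, 1-t) = W r t powr (1/r)"
proof -
  have "sqrt (2*(1-t)) powr r = (2*(1-t)) powr (r/2)"
    using assms by (simp add: powr_half_sqrt[symmetric] powr_powr)
  then show ?thesis unfolding ces_welfare_def W_def by simp
qed

lemma W_nonneg: "W r t \<ge> 0" unfolding W_def by simp

lemma sqrt_ineq:
  fixes a :: real
  assumes "1/2 < a" "a \<le> 1"
  shows "a - (1-a) < sqrt (2*a) - sqrt (2*(1-a))"
proof -
  define u where "u = sqrt (2*a)"
  define v where "v = sqrt (2*(1-a))"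
  have u2: "u^2 = 2*a" unfolding u_def using assms by simp
  have v2: "v^2 = 2*(1-a)" unfolding v_def using assms by simp
  have "u \<ge> 0" "v \<ge> 0" using assms by (auto simp: u_def v_def)
  have "v < u" unfolding u_def v_def using assms by (intro real_sqrt_less_mono) auto
  have "(u - v)^2 > 0" using \<open>v < u\<close> by simp
  hence "2 * u * v < 2" using u2 v2 by (simp add: power2_eq_square algebra_simps)
  hence "(u+v)^2 < 2^2" using u2 v2 by (simp add: power2_eq_square algebra_simps)
  hence "u + v < 2" by (rule power2_less_imp_less) simp
  define d where "d = a - (1-a)"
  have dpos: "d > 0" using assms by (simp add: d_def)
  have e: "(u - v) * (u + v) = 2 * d" using u2 v2 unfolding d_def by (simp add: power2_eq_square algebra_simps)
  have "d * (u+v) < d * 2" using dpos \<open>u + v < 2\<close> by (rule mult_strict_left_mono[rotated])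
  hence "d * (u+v) < (u - v) * (u + v)" using e by simp
  hence "d < u - v" by (rule mult_right_less_imp_less) (use \<open>u \<ge> 0\<close> \<open>v \<ge> 0\<close> in simp)
  hence "u - v > a - (1-a)" by (simp add: d_def)
  then show ?thesis by (simp add: u_def v_def)
qed

lemma W0:
  fixes r :: real
  assumes "0 < r" "r < 1"
  shows "W r 0 < W r (1/2)"
proof -
  have "(1/2::real) powr r \<ge> (1/2) powr 1" using powr_mono'[of r 1 "1/2::real"] assms by simp
  moreover have "(2::real) powr (r/2) \<le> 2 powr (1/2)" using powr_mono[of "r/2" "1/2" "2::real"] assms by simp
  moreover have "(2::real) powr (1/2) < 3/2"
  proof -
    have "(2::real) powr (1/2) = sqrt 2" by (simp add: powr_half_sqrt)
    moreover have "sqrt 2 < sqrt ((3/2)^2)" by (intro real_sqrt_less_mono) (simp add: power2_eq_square)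
    ultimately show ?thesis by simp
  qed
  moreover have "(1/2::real) powr 1 = 1/2" by simp
  moreover have "W r 0 = 2 powr (r/2)" using assms by (simp add: W_def)
  moreover have "W r (1/2) = (1/2) powr r + 1" by (simp add: W_def)
  ultimately show ?thesis by linarith
qed

lemma W_le_half:
  fixes r a :: real
  assumes "0 < r" "r < 1" "0 \<le> a" "a \<le> 1/2"
  shows "W r a \<le> W r (1/2)"
proof -
  consider "a = 1/2" | "a = 0" | "0 < a" "a < 1/2" using assms by linarith
  then show ?thesis
  proof cases
    case 1 then show ?thesis by (simp only: order_refl)
  next
    case 2 then show ?thesis using W0[OF assms(1,2)] by simp
  next
    case 3
    have "W r a < W r (1/2)"
    proof (rule DERIV_pos_imp_increasing[OF 3(2)])
      fix x assume "a \<le> x" "x \<le> 1/2"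
      then show "\<exists>y. DERIV (W r) x :> y \<and> y > 0"
        using W_deriv[of x r] W_deriv_pos[of r x] assms 3 by auto
    qed
    then show ?thesis by simp
  qed
qed

lemma W_beyond:
  fixes r :: real
  assumes "0 < r" "r < 1"
  shows "\<exists>c. 1/2 < c \<and> c < 1 \<and> W r (1/2) < W r c"
proof -
  obtain d where d: "d > 0" "\<forall>h>0. h < d \<longrightarrow> W r (1/2) < W r (1/2 + h)"
    using DERIV_pos_inc_right[OF W_deriv[of "1/2" r] W_deriv_pos[of r "1/2"]] assms by auto
  define h where "h = min (d/2) (1/4)"
  have "h > 0" "h < d" "h \<le> 1/4" using d by (auto simp: h_def)
  then show ?thesis using d by (intro exI[of _ "1/2+h"]) auto
qed

theorem mainTheorem12:
  fixes \<rho> :: real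
  assumes "0 < \<rho>" and "\<rho> < 1"
  shows "\<not> (\<exists>x p. x \<in> Psi \<rho> (\<lambda>t. t) (\<lambda>t. sqrt (2 * t)) \<and>
                  (\<forall>y\<ge>0. p y \<ge> 0) \<and>
                  walrasian_eq (\<lambda>t. t) (\<lambda>t. sqrt (2 * t)) x p)"
proof
  assume "\<exists>x p. x \<in> Psi \<rho> (\<lambda>t. t) (\<lambda>t. sqrt (2 * t)) \<and>
                  (\<forall>y\<ge>0. p y \<ge> 0) \<and>
                  walrasian_eq (\<lambda>t. t) (\<lambda>t. sqrt (2 * t)) x p"
  then obtain a b p where
    psi: "(a,b) \<in> Psi \<rho> (\<lambda>t. t) (\<lambda>t. sqrt (2 * t))" and
    pnn: "\<forall>y\<ge>0. p y \<ge> 0" and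
    we: "walrasian_eq (\<lambda>t. t) (\<lambda>t. sqrt (2 * t)) (a,b) p"
    by (metis prod.exhaust)
  have feas: "a \<ge> 0" "b \<ge> 0" "a + b \<le> 1" using psi by (auto simp: Psi_def feasible_def)
  have opt: "\<And>y. feasible y \<Longrightarrow> ces_welfare \<rho> (\<lambda>t. t) (\<lambda>t. sqrt (2 * t)) y
      \<le> ces_welfare \<rho> (\<lambda>t. t) (\<lambda>t. sqrt (2 * t)) (a,b)"
    using psi by (auto simp: Psi_def)
  have d1: "\<And>z. z \<ge> 0 \<Longrightarrow> z - p z \<le> a - p a"
    using we by (auto simp: walrasian_eq_def demand_def)
  have d2: "\<And>z. z \<ge> 0 \<Longrightarrow> sqrt (2*z) - p z \<le> sqrt (2*b) - p b"
    using we by (auto simp: walrasian_eq_def demand_def)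
  have "\<exists>y\<ge>0. p y > 0"
  proof (rule ccontr)
    assume "\<not> ?thesis"
    hence "\<And>y. y \<ge> 0 \<Longrightarrow> p y = 0" using pnn by force
    then show False using d1[of "a+1"] feas by simp
  qed
  hence ab: "a + b = 1" using we by (auto simp: walrasian_eq_def)
  have "a - b \<ge> sqrt (2*a) - sqrt (2*b)" using d1[of b] d2[of a] feas by linarith
  hence ahalf: "a \<le> 1/2" using sqrt_ineq[of a] feas unfolding ab[symmetric]
    by (smt (verit) ab)
  obtain c where c: "1/2 < c" "c < 1" "W \<rho> (1/2) < W \<rho> c" using W_beyond assms by blast
  have "W \<rho> a < W \<rho> c" using W_le_half[of \<rho> a] assms feas ahalf c by linarith
  hence "W \<rho> a powr (1/\<rho>) < W \<rho> c powr (1/\<rho>)"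
    using assms W_nonneg by (intro powr_less_mono2) auto
  moreover have "feasible (c, 1-c)" using c by (simp add: feasible_def)
  ultimately show False
    using opt[of "(c,1-c)"] ces_W[of c \<rho>] ces_W[of a \<rho>] c feas ab
    by (smt (verit) eq_diff_eq')
qed

end
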